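(* Let $A$ be a fixed $s \times t$ matrix and let $A'$ be the $s' \times t$ matrix obtained from $A$ by deleting rows that are equal to their predecessors in $A$. There exist polynomials $p_1,p_2$ (depending only on $A$) such that for every $\epsilon > 0$, with $n_1 = p_1(\epsilon^{-1})$ and $\tau = 1/p_2(\epsilon^{-1})$, for every $n \geq n_1$, every $n \times n$ matrix $M$ that contains $\epsilon n^{s'+t}$ copies of $A'$ also contains $\tau n^{s+t}$ copies of $A$.
   Context: Matrices are over a fixed finite alphabet, with ordered rows and columns. A submatrix is obtained by deleting rows and columns while preserving order; a copy of a matrix $B$ in $M$ is a submatrix of $M$ equal to $B$. The predecessor of a row in $A$ is the row immediately preceding it in $A$. *)

theory Defs
  imports "HOL-Computational_Algebra.Polynomial"
begin

text \<open>A matrix over alphabet 'a is a function nat => nat => 'a; its dimensions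
are carried separately. Only entries with indices below the dimensions matter.\<close>

definition copies ::
  "(nat \<Rightarrow> nat \<Rightarrow> 'a) \<Rightarrow> nat \<Rightarrow> nat \<Rightarrow> (nat \<Rightarrow> nat \<Rightarrow> 'a) \<Rightarrow> nat \<Rightarrow> nat" where
  "copies B s t M n = card {(R, C). R \<subseteq> {..<n} \<and> card R = s \<and> C \<subseteq> {..<n} \<and> card C = t \<and>
      (\<forall>i<s. \<forall>j<t. M (sorted_list_of_set R ! i) (sorted_list_of_set C ! j) = B i j)}"

definition kept_rows :: "(nat \<Rightarrow> nat \<Rightarrow> 'a) \<Rightarrow> nat \<Rightarrow> nat \<Rightarrow> nat list" where
  "kept_rows A s t = filter (\<lambda>i. i = 0 \<or> (\<exists>j<t. A i j \<noteq> A (i - 1) j)) [0..<s]"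

definition dedup_rows :: "(nat \<Rightarrow> nat \<Rightarrow> 'a) \<Rightarrow> nat \<Rightarrow> nat \<Rightarrow> (nat \<Rightarrow> nat \<Rightarrow> 'a)" where
  "dedup_rows A s t = (\<lambda>i j. A (kept_rows A s t ! i) j)"

definition dedup_height :: "(nat \<Rightarrow> nat \<Rightarrow> 'a) \<Rightarrow> nat \<Rightarrow> nat \<Rightarrow> nat" where
  "dedup_height A s t = length (kept_rows A s t)"

end

theory Submission
  imports Defs
begin

lemma cs_ineq:
  fixes f :: "'b \<Rightarrow> real"
  assumes "finite K"
  shows "(\<Sum>k\<in>K. f k)^2 \<le> real (card K) * (\<Sum>k\<in>K. (f k)^2)"
proof -
  have e1: "(\<Sum>a\<in>K. \<Sum>b\<in>K. (f a)^2) = real (card K) * (\<Sum>k\<in>K. (f k)^2)"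
    by (simp add: sum_distrib_left)
  have e2: "(\<Sum>a\<in>K. \<Sum>b\<in>K. (f b)^2) = real (card K) * (\<Sum>k\<in>K. (f k)^2)"
    by (simp add: sum_distrib_left)
  have e3: "(\<Sum>a\<in>K. \<Sum>b\<in>K. f a * f b) = (\<Sum>k\<in>K. f k)^2"
    by (simp add: power2_eq_square sum_product)
  have "0 \<le> (\<Sum>a\<in>K. \<Sum>b\<in>K. (f a - f b)^2)" by (intro sum_nonneg) auto
  also have "\<dots> = (\<Sum>a\<in>K. \<Sum>b\<in>K. (f a)^2 + (f b)^2 - 2 * (f a * f b))"
    by (simp add: power2_diff mult.assoc)
  also have "\<dots> = (\<Sum>a\<in>K. \<Sum>b\<in>K. (f a)^2) + (\<Sum>a\<in>K. \<Sum>b\<in>K. (f b)^2) - 2 * (\<Sum>a\<in>K. \<Sum>b\<in>K. f a * f b)"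
    by (simp add: sum.distrib sum_subtractf sum_distrib_left)
  finally show ?thesis unfolding e1 e2 e3 by simp
qed

lemma sl_sorted: "sorted_wrt (<) xs \<Longrightarrow> sorted_list_of_set (set xs) = xs"
proof -
  assume a: "sorted_wrt (<) xs"
  then have "distinct xs" using strict_sorted_iff by blast
  then show ?thesis using a sorted_list_of_set_unique[of "set xs" xs] by (simp add: distinct_card)
qed

lemma core:
  fixes Rx Ry :: "nat set"
  assumes Rx: "Rx \<subseteq> {..<n}" "card Rx = h" and Ry: "Ry \<subseteq> {..<n}" "card Ry = h" and i: "i < h"
    and kt: "take i (sorted_list_of_set Rx) = take i (sorted_list_of_set Ry)"
    and kd: "drop (Suc i) (sorted_list_of_set Rx) = drop (Suc i) (sorted_list_of_set Ry)"
    and lt: "sorted_list_of_set Rx ! i < sorted_list_of_set Ry ! i"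
  defines "L2 \<equiv> take i (sorted_list_of_set Rx) @ sorted_list_of_set Rx ! i # sorted_list_of_set Ry ! i # drop (Suc i) (sorted_list_of_set Rx)"
  shows "sorted_list_of_set (set L2) = L2" "set L2 \<subseteq> {..<n}" "card (set L2) = Suc h"
    "\<And>r. r < Suc h \<Longrightarrow> L2 ! r = (if r = Suc i then sorted_list_of_set Ry ! i
         else sorted_list_of_set Rx ! (if r \<le> i then r else r - 1))"
proof -
  have fx: "finite Rx" and fy: "finite Ry" using Rx Ry finite_subset by blast+
  define Lx where "Lx = sorted_list_of_set Rx"
  define Ly where "Ly = sorted_list_of_set Ry"
  have lx: "length Lx = h" "sorted_wrt (<) Lx" "set Lx = Rx"
    using fx Rx by (auto simp: Lx_def)
  have ly: "length Ly = h" "sorted_wrt (<) Ly" "set Ly = Ry"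
    using fy Ry by (auto simp: Ly_def)
  have ex: "Lx = take i Lx @ Lx ! i # drop (Suc i) Lx" using id_take_nth_drop i lx(1) by auto
  have ey: "Ly = take i Lx @ Ly ! i # drop (Suc i) Lx" using id_take_nth_drop i ly(1) kt kd
    unfolding Lx_def Ly_def by metis
  have s1: "sorted_wrt (<) (take i Lx @ Lx ! i # drop (Suc i) Lx)" using lx(2) ex by metis
  have s2: "sorted_wrt (<) (take i Lx @ Ly ! i # drop (Suc i) Lx)" using ly(2) ey by metis
  have L2: "L2 = take i Lx @ Lx ! i # Ly ! i # drop (Suc i) Lx" unfolding L2_def Lx_def Ly_def by simp
  have sL2: "sorted_wrt (<) L2" unfolding L2 using s1 s2 lt unfolding Lx_def[symmetric] Ly_def[symmetric]
    by (auto simp: sorted_wrt_append)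
  show "sorted_list_of_set (set L2) = L2" using sL2 sl_sorted by blast
  have "set L2 \<subseteq> set Lx \<union> set Ly" unfolding L2
    using nth_mem[of i Lx] nth_mem[of i Ly] lx(1) ly(1) i set_take_subset[of i Lx] set_drop_subset[of "Suc i" Lx] by auto
  then show "set L2 \<subseteq> {..<n}" using lx ly Rx Ry by auto
  have lenT: "length (take i Lx) = i" using lx i by simp
  have "length L2 = Suc h" unfolding L2 using lx i by simp
  then show "card (set L2) = Suc h" using sL2 distinct_card strict_sorted_iff by metis
  fix r assume r: "r < Suc h"
  have "L2 ! r = (if r = Suc i then Ly ! i else Lx ! (if r \<le> i then r else r - 1))"
  proof (cases "r < i")
    case True then show ?thesis using lenT by (simp add: L2 nth_append)
  next
    case False
    then consider "r = i" | "r = Suc i" | "r > Suc i" by linarith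
    then show ?thesis
    proof cases
      case 3
      have q: "r - i = Suc (Suc (r - Suc (Suc i)))" "Suc (r - 2) = r - Suc 0" using 3 by simp_all
      show ?thesis using q 3 lenT lx(1) r by (simp add: L2 nth_append)
    qed (use lenT in \<open>simp_all add: L2 nth_append\<close>)
  qed
  then show "L2 ! r = (if r = Suc i then sorted_list_of_set Ry ! i
         else sorted_list_of_set Rx ! (if r \<le> i then r else r - 1))"
    by (simp add: Lx_def Ly_def)
qed

lemma copies_cong:
  assumes "\<And>r j. r < s \<Longrightarrow> j < t \<Longrightarrow> B r j = B' r j"
  shows "copies B s t M n = copies B' s t M n"
  unfolding copies_def using assms by (intro arg_cong[where f=card] Collect_cong) auto

lemma sl_decomp:
  assumes "R \<subseteq> {..<(n::nat)}" "card R = h" "i < h"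
  shows "finite R" "set (sorted_list_of_set R) = R" "length (sorted_list_of_set R) = h"
    "sorted_list_of_set R = take i (sorted_list_of_set R) @ sorted_list_of_set R ! i # drop (Suc i) (sorted_list_of_set R)"
    "length (take i (sorted_list_of_set R)) = i"
proof -
  show f: "finite R" using assms finite_subset by blast
  show "set (sorted_list_of_set R) = R" using f by simp
  show l: "length (sorted_list_of_set R) = h" using f assms by simp
  show "sorted_list_of_set R = take i (sorted_list_of_set R) @ sorted_list_of_set R ! i # drop (Suc i) (sorted_list_of_set R)"
    using id_take_nth_drop[of i "sorted_list_of_set R"] l assms(3) by auto
  show "length (take i (sorted_list_of_set R)) = i" using l assms(3) by simp
qed

lemma card_subsets_le: "card {C. C \<subseteq> {..<(n::nat)} \<and> card C = t} \<le> n ^ t"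
proof -
  have "card {C. C \<subseteq> {..<(n::nat)} \<and> card C = t} = n choose t" by (simp add: n_subsets)
  also have "\<dots> \<le> n ^ t"
    by (cases "t \<le> n") (auto simp: binomial_le_pow binomial_eq_0)
  finally show ?thesis .
qed

lemma step:
  fixes B B2 M :: "nat \<Rightarrow> nat \<Rightarrow> 'a"
  assumes i: "i < h"
    and B2: "\<And>r j. r \<le> h \<Longrightarrow> j < t \<Longrightarrow> B2 r j = B (if r \<le> i then r else r - 1) j"
    and eps: "\<epsilon> > 0" and nbig: "real n \<ge> 4 / \<epsilon>"
    and hyp: "real (copies B h t M n) \<ge> \<epsilon> * real n ^ (h + t)"
  shows "real (copies B2 (Suc h) t M n) \<ge> \<epsilon>^2 / 4 * real n ^ (Suc h + t)"
proof -
  define S where "S = {(R, C). R \<subseteq> {..<n} \<and> card R = h \<and> C \<subseteq> {..<n} \<and> card C = t \<and>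
      (\<forall>i<h. \<forall>j<t. M (sorted_list_of_set R ! i) (sorted_list_of_set C ! j) = B i j)}"
  define S2 where "S2 = {(R, C). R \<subseteq> {..<n} \<and> card R = Suc h \<and> C \<subseteq> {..<n} \<and> card C = t \<and>
      (\<forall>i<Suc h. \<forall>j<t. M (sorted_list_of_set R ! i) (sorted_list_of_set C ! j) = B2 i j)}"
  have cS: "copies B h t M n = card S" unfolding copies_def S_def ..
  have cS2: "copies B2 (Suc h) t M n = card S2" unfolding copies_def S2_def ..
  have finS: "finite S"
    by (rule finite_subset[of _ "Pow {..<n} \<times> Pow {..<n}"]) (auto simp: S_def)
  have finS2: "finite S2"
    by (rule finite_subset[of _ "Pow {..<n} \<times> Pow {..<n}"]) (auto simp: S2_def)
  define key where "key = (\<lambda>(R::nat set, C::nat set). (take i (sorted_list_of_set R), drop (Suc i) (sorted_list_of_set R), C))"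
  define e where "e = (\<lambda>(R::nat set, C::nat set). sorted_list_of_set R ! i)"
  define KK where "KK = key ` S"
  define F where "F = (\<lambda>k. {x\<in>S. key x = k})"
  define N where "N = card S"
  have finKK: "finite KK" using finS KK_def by simp
  have finF: "\<And>k. finite (F k)" using finS F_def by simp
  have SU: "S = (\<Union>k\<in>KK. F k)" by (auto simp: KK_def F_def)
  have N_sum: "N = (\<Sum>k\<in>KK. card (F k))"
  proof -
    have disjS: "\<forall>k\<in>KK. \<forall>k'\<in>KK. k \<noteq> k' \<longrightarrow> F k \<inter> F k' = {}"
      by (auto simp: F_def)
    show ?thesis unfolding N_def
      by (subst SU, rule card_UN_disjoint[OF finKK]) (use finF disjS in auto)
  qed
  define P where "P = {(x, y). x \<in> S \<and> y \<in> S \<and> key x = key y}"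
  have PU: "P = (\<Union>k\<in>KK. F k \<times> F k)" by (auto simp: P_def KK_def F_def)
  have P_sum: "card P = (\<Sum>k\<in>KK. card (F k) ^ 2)"
  proof -
    have disjF: "\<forall>k\<in>KK. \<forall>k'\<in>KK. k \<noteq> k' \<longrightarrow> (F k \<times> F k) \<inter> (F k' \<times> F k') = {}"
      by (auto simp: F_def)
    show ?thesis unfolding PU
      by (subst card_UN_disjoint[OF finKK]) (use finF disjF in \<open>auto simp: card_cartesian_product power2_eq_square\<close>)
  qed
  define KS where "KS = {xs. set xs \<subseteq> {..<n} \<and> length xs = i} \<times> {xs. set xs \<subseteq> {..<n} \<and> length xs = h - Suc i} \<times> {C. C \<subseteq> {..<n} \<and> card C = t}"
  have KK_sub: "KK \<subseteq> KS"
  proof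
    fix k assume "k \<in> KK"
    then obtain R C where RC: "(R, C) \<in> S" "k = key (R, C)" by (auto simp: KK_def)
    then have R: "R \<subseteq> {..<n}" "card R = h" "C \<subseteq> {..<n}" "card C = t" by (auto simp: S_def)
    note d = sl_decomp[OF R(1,2) i]
    show "k \<in> KS" using RC(2) R d i set_take_subset[of i "sorted_list_of_set R"] set_drop_subset[of "Suc i" "sorted_list_of_set R"]
      by (auto simp: KS_def key_def)
  qed
  have finC: "finite {C. C \<subseteq> {..<n} \<and> card C = t}"
    by (rule finite_subset[of _ "Pow {..<n}"]) auto
  have finKS: "finite KS" unfolding KS_def
    using finC by (simp add: finite_lists_length_eq)
  have "card KK \<le> card KS" using KK_sub finKS by (rule card_mono[rotated])
  also have "\<dots> = n ^ i * n ^ (h - Suc i) * card {C. C \<subseteq> {..<n} \<and> card C = t}"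
    by (simp add: KS_def card_cartesian_product card_lists_length_eq)
  also have "\<dots> \<le> n ^ i * n ^ (h - Suc i) * n ^ t" using card_subsets_le by simp
  also have "\<dots> = n ^ (h - 1 + t)"
  proof -
    have "i + (h - Suc i) + t = h - 1 + t" using i by simp
    then show ?thesis by (metis power_add)
  qed
  finally have cKK: "card KK \<le> n ^ (h - 1 + t)" .
  have cs: "(real N)^2 \<le> real (card KK) * real (card P)"
    using cs_ineq[OF finKK, of "\<lambda>k. real (card (F k))"] unfolding N_sum P_sum by simp
  have eqx: "x = y" if "x \<in> S" "y \<in> S" "key x = key y" "e x = e y" for x y
  proof -
    obtain Rx Cx where x: "x = (Rx, Cx)" by fastforce
    obtain Ry Cy where y: "y = (Ry, Cy)" by fastforce
    have Rx: "Rx \<subseteq> {..<n}" "card Rx = h" using that(1) x by (auto simp: S_def)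
    have Ry: "Ry \<subseteq> {..<n}" "card Ry = h" using that(2) y by (auto simp: S_def)
    note dx = sl_decomp[OF Rx i] and dy = sl_decomp[OF Ry i]
    have k: "take i (sorted_list_of_set Rx) = take i (sorted_list_of_set Ry)"
      "drop (Suc i) (sorted_list_of_set Rx) = drop (Suc i) (sorted_list_of_set Ry)" "Cx = Cy"
      using that(3) x y by (auto simp: key_def)
    have "sorted_list_of_set Rx ! i = sorted_list_of_set Ry ! i" using that(4) x y by (simp add: e_def)
    then have "sorted_list_of_set Rx = sorted_list_of_set Ry" using dx(4) dy(4) k by metis
    then have "Rx = Ry" using dx(2) dy(2) by metis
    then show ?thesis using x y k by simp
  qed
  define Qle where "Qle = {p \<in> P. e (fst p) \<le> e (snd p)}"
  define Q where "Q = {p \<in> P. e (fst p) < e (snd p)}"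
  have finP: "finite P" by (rule finite_subset[of _ "S \<times> S"]) (auto simp: P_def finS)
  have finQle: "finite Qle" using finP by (simp add: Qle_def)
  have finQ: "finite Q" using finP by (simp add: Q_def)
  have PQ: "P \<subseteq> Qle \<union> prod.swap ` Qle"
  proof
    fix p assume p: "p \<in> P"
    obtain x y where pxy: "p = (x, y)" by (metis prod.exhaust)
    show "p \<in> Qle \<union> prod.swap ` Qle"
    proof (cases "e x \<le> e y")
      case True then show ?thesis using p pxy by (auto simp: Qle_def)
    next
      case False
      then have "(y, x) \<in> Qle" using p pxy by (auto simp: Qle_def P_def)
      then have "prod.swap (y, x) \<in> prod.swap ` Qle" by (rule imageI)
      then show ?thesis using pxy by simp
    qed
  qed
  have cP: "card P \<le> 2 * card Qle"
  proof -
    have "card P \<le> card (Qle \<union> prod.swap ` Qle)" using PQ finQle by (intro card_mono) auto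
    also have "\<dots> \<le> card Qle + card (prod.swap ` Qle)" by (rule card_Un_le)
    also have "\<dots> \<le> card Qle + card Qle" using card_image_le[OF finQle, of prod.swap] by simp
    finally show ?thesis by simp
  qed
  have QQ: "Qle \<subseteq> Q \<union> (\<lambda>x. (x, x)) ` S"
  proof
    fix p assume p: "p \<in> Qle"
    obtain x y where pxy: "p = (x, y)" by (metis prod.exhaust)
    show "p \<in> Q \<union> (\<lambda>x. (x, x)) ` S"
    proof (cases "e x < e y")
      case True then show ?thesis using p pxy by (auto simp: Qle_def Q_def)
    next
      case False
      then have "e x = e y" using p pxy by (auto simp: Qle_def)
      moreover have "x \<in> S" "y \<in> S" "key x = key y" using p pxy by (auto simp: Qle_def P_def)
      ultimately have "x = y" using eqx by blast
      then show ?thesis using pxy \<open>x \<in> S\<close> by auto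
    qed
  qed
  have cQle: "card Qle \<le> card Q + N"
  proof -
    have "card Qle \<le> card (Q \<union> (\<lambda>x. (x, x)) ` S)" using QQ finQ finS by (intro card_mono) auto
    also have "\<dots> \<le> card Q + card ((\<lambda>x. (x, x)) ` S)" by (rule card_Un_le)
    also have "\<dots> \<le> card Q + N" using card_image_le[OF finS, of "\<lambda>x. (x, x)"] by (simp add: N_def)
    finally show ?thesis .
  qed
  have Qinfo: "\<exists>Rx C Ry. p = ((Rx, C), (Ry, C)) \<and> Rx \<subseteq> {..<n} \<and> card Rx = h \<and> Ry \<subseteq> {..<n} \<and> card Ry = h
     \<and> C \<subseteq> {..<n} \<and> card C = t
     \<and> take i (sorted_list_of_set Rx) = take i (sorted_list_of_set Ry)
     \<and> drop (Suc i) (sorted_list_of_set Rx) = drop (Suc i) (sorted_list_of_set Ry)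
     \<and> sorted_list_of_set Rx ! i < sorted_list_of_set Ry ! i
     \<and> (\<forall>r<h. \<forall>j<t. M (sorted_list_of_set Rx ! r) (sorted_list_of_set C ! j) = B r j)
     \<and> (\<forall>r<h. \<forall>j<t. M (sorted_list_of_set Ry ! r) (sorted_list_of_set C ! j) = B r j)"
    if "p \<in> Q" for p
  proof -
    obtain Rx C Ry Cy where pq: "p = ((Rx, C), (Ry, Cy))" by (metis prod.exhaust)
    have "Cy = C" using that pq by (auto simp: Q_def P_def key_def)
    then show ?thesis using that pq by (auto simp: Q_def P_def key_def e_def S_def)
  qed
  define \<phi> where "\<phi> = (\<lambda>(x::nat set \<times> nat set, y::nat set \<times> nat set).
     (set (take i (sorted_list_of_set (fst x)) @ sorted_list_of_set (fst x) ! i # sorted_list_of_set (fst y) ! i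
       # drop (Suc i) (sorted_list_of_set (fst x))), snd x))"
  have phiS2: "\<phi> p \<in> S2" if pQ: "p \<in> Q" for p
  proof -
    obtain Rx C Ry where pq: "p = ((Rx, C), (Ry, C))" and Rx: "Rx \<subseteq> {..<n}" "card Rx = h"
      and Ry: "Ry \<subseteq> {..<n}" "card Ry = h" and C: "C \<subseteq> {..<n}" "card C = t"
      and k: "take i (sorted_list_of_set Rx) = take i (sorted_list_of_set Ry)"
        "drop (Suc i) (sorted_list_of_set Rx) = drop (Suc i) (sorted_list_of_set Ry)"
      and lt: "sorted_list_of_set Rx ! i < sorted_list_of_set Ry ! i"
      and mx: "\<forall>r<h. \<forall>j<t. M (sorted_list_of_set Rx ! r) (sorted_list_of_set C ! j) = B r j"
      and my: "\<forall>r<h. \<forall>j<t. M (sorted_list_of_set Ry ! r) (sorted_list_of_set C ! j) = B r j"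
      using Qinfo[OF pQ] by blast
    define L2 where "L2 = take i (sorted_list_of_set Rx) @ sorted_list_of_set Rx ! i # sorted_list_of_set Ry ! i # drop (Suc i) (sorted_list_of_set Rx)"
    note c = core[OF Rx Ry i k(1) k(2) lt, folded L2_def]
    have phi: "\<phi> p = (set L2, C)" by (simp add: \<phi>_def pq L2_def)
    have match: "M (L2 ! r) (sorted_list_of_set C ! j) = B2 r j" if "r < Suc h" "j < t" for r j
    proof (cases "r = Suc i")
      case True
      then have "L2 ! r = sorted_list_of_set Ry ! i" using c(4)[OF that(1)] by simp
      moreover have "B2 r j = B i j" using B2[of r j] True i that by simp
      ultimately show ?thesis using my i that(2) by simp
    next
      case False
      have "L2 ! r = sorted_list_of_set Rx ! (if r \<le> i then r else r - 1)" using c(4)[OF that(1)] False by simp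
      moreover have "B2 r j = B (if r \<le> i then r else r - 1) j" using B2[of r j] that by simp
      moreover have "(if r \<le> i then r else r - 1) < h" using that False i by auto
      ultimately show ?thesis using mx that(2) by simp
    qed
    show ?thesis unfolding phi S2_def using c(1,2,3) C match by simp
  qed
  have inj: "inj_on \<phi> Q"
  proof (rule inj_onI)
    fix p q assume p: "p \<in> Q" and q: "q \<in> Q" and eq: "\<phi> p = \<phi> q"
    obtain Rx C Ry where pq: "p = ((Rx, C), (Ry, C))" and Rx: "Rx \<subseteq> {..<n}" "card Rx = h"
      and Ry: "Ry \<subseteq> {..<n}" "card Ry = h"
      and k: "take i (sorted_list_of_set Rx) = take i (sorted_list_of_set Ry)"
        "drop (Suc i) (sorted_list_of_set Rx) = drop (Suc i) (sorted_list_of_set Ry)"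
      and lt: "sorted_list_of_set Rx ! i < sorted_list_of_set Ry ! i"
      using Qinfo[OF p] by blast
    obtain Rx' C' Ry' where qq: "q = ((Rx', C'), (Ry', C'))" and Rx': "Rx' \<subseteq> {..<n}" "card Rx' = h"
      and Ry': "Ry' \<subseteq> {..<n}" "card Ry' = h"
      and k': "take i (sorted_list_of_set Rx') = take i (sorted_list_of_set Ry')"
        "drop (Suc i) (sorted_list_of_set Rx') = drop (Suc i) (sorted_list_of_set Ry')"
      and lt': "sorted_list_of_set Rx' ! i < sorted_list_of_set Ry' ! i"
      using Qinfo[OF q] by blast
    define L2 where "L2 = take i (sorted_list_of_set Rx) @ sorted_list_of_set Rx ! i # sorted_list_of_set Ry ! i # drop (Suc i) (sorted_list_of_set Rx)"
    define L2' where "L2' = take i (sorted_list_of_set Rx') @ sorted_list_of_set Rx' ! i # sorted_list_of_set Ry' ! i # drop (Suc i) (sorted_list_of_set Rx')"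
    note c = core[OF Rx Ry i k(1) k(2) lt, folded L2_def]
    note c' = core[OF Rx' Ry' i k'(1) k'(2) lt', folded L2'_def]
    note dx = sl_decomp[OF Rx i] and dy = sl_decomp[OF Ry i]
    note dx' = sl_decomp[OF Rx' i] and dy' = sl_decomp[OF Ry' i]
    have "set L2 = set L2'" "C = C'" using eq by (simp_all add: \<phi>_def pq qq L2_def L2'_def)
    then have "L2 = L2'" using c(1) c'(1) by metis
    then have e4: "take i (sorted_list_of_set Rx) = take i (sorted_list_of_set Rx')"
      "sorted_list_of_set Rx ! i = sorted_list_of_set Rx' ! i"
      "sorted_list_of_set Ry ! i = sorted_list_of_set Ry' ! i"
      "drop (Suc i) (sorted_list_of_set Rx) = drop (Suc i) (sorted_list_of_set Rx')"
      unfolding L2_def L2'_def using dx(5) dx'(5) by (simp_all add: append_eq_append_conv)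
    have "sorted_list_of_set Rx = sorted_list_of_set Rx'" using dx(4) dx'(4) e4 by metis
    then have "Rx = Rx'" using dx(2) dx'(2) by metis
    have "sorted_list_of_set Ry = sorted_list_of_set Ry'" using dy(4) dy'(4) e4 k k' by metis
    then have "Ry = Ry'" using dy(2) dy'(2) by metis
    show "p = q" using pq qq \<open>Rx = Rx'\<close> \<open>Ry = Ry'\<close> \<open>C = C'\<close> by simp
  qed
  have cQ: "card Q \<le> card S2"
    by (rule card_inj_on_le[OF inj _ finS2]) (use phiS2 in auto)
  have e4: "4 / \<epsilon> > 0" using eps by simp
  have npos: "real n > 0" using nbig e4 by linarith
  have en: "\<epsilon> * real n \<ge> 4" using nbig eps by (simp add: pos_divide_le_eq mult.commute)
  define W where "W = real n ^ (h - 1 + t)"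
  have Wpos: "W > 0" using npos by (simp add: W_def)
  have hs: "h + t = Suc (h - 1 + t)" "Suc h + t = Suc (Suc (h - 1 + t))" using i by simp_all
  have pw1: "real n ^ (h + t) = W * real n" unfolding hs W_def by simp
  have pw2: "real n ^ (Suc h + t) = W * real n * real n" unfolding hs W_def by simp
  have hN: "real N \<ge> \<epsilon> * W * real n" using hyp cS pw1 N_def by (simp add: mult.assoc)
  have cKKr: "real (card KK) \<le> W" using cKK unfolding W_def by (metis of_nat_le_iff of_nat_power)
  have N0: "real N \<ge> 0" by simp
  have "real N * (\<epsilon> * W * real n) \<le> (real N)^2" using hN N0 by (simp add: power2_eq_square mult_left_mono)
  also have "\<dots> \<le> real (card KK) * real (card P)" by (rule cs)
  also have "\<dots> \<le> W * real (card P)" using cKKr by (intro mult_right_mono) auto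
  finally have "W * (real N * \<epsilon> * real n) \<le> W * real (card P)" by (simp add: algebra_simps)
  then have cPr: "real N * \<epsilon> * real n \<le> real (card P)" using Wpos by simp
  have "real (card P) \<le> 2 * real (card Q) + 2 * real N" using cP cQle by linarith
  then have cQr: "real (card Q) \<ge> real N * \<epsilon> * real n / 2 - real N" using cPr by linarith
  have "0 \<le> real N * (\<epsilon> * real n / 4 - 1)" using en N0 by (intro mult_nonneg_nonneg) auto
  then have s1: "real N * (\<epsilon> * real n) / 4 \<le> real N * \<epsilon> * real n / 2 - real N" by (simp add: algebra_simps)
  have s2: "\<epsilon> * W * real n * (\<epsilon> * real n) / 4 \<le> real N * (\<epsilon> * real n) / 4"
    using hN en by (intro divide_right_mono mult_right_mono) auto
  have "\<epsilon>^2 / 4 * real n ^ (Suc h + t) = \<epsilon> * W * real n * (\<epsilon> * real n) / 4"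
    unfolding pw2 by (simp add: power2_eq_square algebra_simps)
  also have "\<dots> \<le> real (card Q)" using s1 s2 cQr by linarith
  also have "\<dots> \<le> real (copies B2 (Suc h) t M n)" using cQ cS2 by simp
  finally show ?thesis .
qed


definition Hl :: "(nat \<Rightarrow> nat \<Rightarrow> 'a) \<Rightarrow> nat \<Rightarrow> nat \<Rightarrow> nat \<Rightarrow> nat list" where
  "Hl A s t k = [0..<k] @ filter (\<lambda>i. i = 0 \<or> (\<exists>j<t. A i j \<noteq> A (i - 1) j)) [k..<s]"

fun cc :: "nat \<Rightarrow> real" where
  "cc 0 = 1"
| "cc (Suc m) = 4 * (cc m)^2"

definition g :: "nat \<Rightarrow> real \<Rightarrow> real" where
  "g m e = e ^ (2 ^ m) / cc m"

lemma cc_pos: "cc m > 0"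
  by (induction m) auto

lemma g_pos: "e > 0 \<Longrightarrow> g m e > 0"
  using cc_pos[of m] by (simp add: g_def)

lemma g_0: "g 0 e = e" by (simp add: g_def)

lemma g_Suc: "g (Suc m) e = (g m e)^2 / 4"
proof -
  have "(2::nat)^Suc m = 2^m + 2^m" by simp
  then have "e^(2^Suc m) = e^(2^m) * e^(2^m)" by (simp only: power_add)
  then show ?thesis using cc_pos[of m] by (simp add: g_def power2_eq_square)
qed

lemma chain:
  fixes A :: "nat \<Rightarrow> nat \<Rightarrow> 'a"
  shows "k \<le> s \<Longrightarrow> \<exists>m \<le> k. \<forall>M \<epsilon> n. \<epsilon> > 0 \<longrightarrow> (\<forall>j<m. real n \<ge> 4 / g j \<epsilon>) \<longrightarrow>
     real (copies (dedup_rows A s t) (dedup_height A s t) t M n) \<ge> \<epsilon> * real n ^ (dedup_height A s t + t) \<longrightarrow>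
     real (copies (\<lambda>r c. A (Hl A s t k ! r) c) (length (Hl A s t k)) t M n) \<ge> g m \<epsilon> * real n ^ (length (Hl A s t k) + t)"
proof (induction k)
  case 0
  have "Hl A s t 0 = kept_rows A s t" by (simp add: Hl_def kept_rows_def)
  then have "(\<lambda>r c. A (Hl A s t 0 ! r) c) = dedup_rows A s t" "length (Hl A s t 0) = dedup_height A s t"
    by (simp_all add: dedup_rows_def dedup_height_def)
  then show ?case by (intro exI[of _ 0]) (simp add: g_0)
next
  case (Suc k)
  then obtain m where m: "m \<le> k" and IH: "\<forall>M \<epsilon> n. \<epsilon> > 0 \<longrightarrow> (\<forall>j<m. real n \<ge> 4 / g j \<epsilon>) \<longrightarrow>
     real (copies (dedup_rows A s t) (dedup_height A s t) t M n) \<ge> \<epsilon> * real n ^ (dedup_height A s t + t) \<longrightarrow>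
     real (copies (\<lambda>r c. A (Hl A s t k ! r) c) (length (Hl A s t k)) t M n) \<ge> g m \<epsilon> * real n ^ (length (Hl A s t k) + t)"
    by auto
  define kp where "kp = (\<lambda>i. i = 0 \<or> (\<exists>j<t. A i j \<noteq> A (i - 1) j))"
  define F where "F = filter kp [Suc k..<s]"
  have ks: "k < s" using Suc.prems by simp
  have upt: "[k..<s] = k # [Suc k..<s]" using ks upt_conv_Cons by blast
  have Hk: "Hl A s t (Suc k) = [0..<k] @ k # F" if "kp k"
    using that by (simp add: Hl_def upt F_def kp_def)
  have Hk2: "Hl A s t k = [0..<k] @ k # F" if "kp k"
    using that by (simp add: Hl_def upt F_def kp_def)
  have Hn: "Hl A s t (Suc k) = [0..<k] @ k # F" "Hl A s t k = [0..<k] @ F" if "\<not> kp k"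
    using that unfolding kp_def by (auto simp: Hl_def upt F_def kp_def)
  show ?case
  proof (cases "kp k")
    case True
    then have "Hl A s t (Suc k) = Hl A s t k" using Hk Hk2 by simp
    then show ?thesis using IH m by (intro exI[of _ m]) auto
  next
    case False
    then have k0: "k \<noteq> 0" and dup: "\<And>j. j < t \<Longrightarrow> A k j = A (k - 1) j" by (auto simp: kp_def)
    note H = Hn[OF False]
    let ?h = "length (Hl A s t k)"
    have hl: "?h = k + length F" "length (Hl A s t (Suc k)) = Suc ?h" using H by simp_all
    have B2: "(\<lambda>r c. A (Hl A s t (Suc k) ! r) c) r j = (\<lambda>r c. A (Hl A s t k ! r) c) (if r \<le> k - 1 then r else r - 1) j"
      if "r \<le> ?h" "j < t" for r j
    proof -
      consider "r < k" | "r = k" | "r > k" by linarith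
      then show ?thesis
      proof cases
        case 1
        then have "r \<le> k - 1" by simp
        then show ?thesis using 1 by (simp add: H nth_append)
      next
        case 2
        then have "\<not> r \<le> k - 1" "r - 1 < k" using k0 by auto
        then show ?thesis using 2 dup[OF that(2)] by (simp add: H nth_append)
      next
        case 3
        have a: "\<not> r \<le> k - 1" using 3 by auto
        have "([0..<k] @ k # F) ! r = (k # F) ! (r - k)" using 3 by (simp add: nth_append)
        also have "\<dots> = F ! (r - Suc k)" using 3 by (simp add: nth_Cons_pos)
        finally have e1: "([0..<k] @ k # F) ! r = F ! (r - Suc k)" .
        have b: "\<not> r - 1 < k" "r - 1 - k = r - Suc k" using 3 by auto
        have e2: "([0..<k] @ F) ! (r - 1) = F ! (r - Suc k)" using b by (simp add: nth_append)
        show ?thesis using a by (simp only: H e1 e2 if_False)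
      qed
    qed
    show ?thesis
    proof (intro exI[of _ "Suc m"] conjI allI impI)
      show "Suc m \<le> Suc k" using m by simp
      fix M \<epsilon> n
      assume eps: "(\<epsilon>::real) > 0" and nb: "\<forall>j<Suc m. 4 / g j \<epsilon> \<le> real n"
        and hyp: "\<epsilon> * real n ^ (dedup_height A s t + t) \<le> real (copies (dedup_rows A s t) (dedup_height A s t) t M n)"
      have c1: "g m \<epsilon> * real n ^ (?h + t) \<le> real (copies (\<lambda>r c. A (Hl A s t k ! r) c) ?h t M n)"
        using IH eps nb hyp by auto
      have "(g m \<epsilon>)^2 / 4 * real n ^ (Suc ?h + t) \<le> real (copies (\<lambda>r c. A (Hl A s t (Suc k) ! r) c) (Suc ?h) t M n)"
        by (rule step[where i = "k - 1"]) (use k0 hl B2 g_pos[OF eps, of m] nb c1 in auto)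
      then show "g (Suc m) \<epsilon> * real n ^ (length (Hl A s t (Suc k)) + t)
          \<le> real (copies (\<lambda>r c. A (Hl A s t (Suc k) ! r) c) (length (Hl A s t (Suc k))) t M n)"
        using hl by (simp add: g_Suc)
    qed
  qed
qed


lemma four_over_g: "e > 0 \<Longrightarrow> 4 / g j e = poly (monom (4 * cc j) (2^j)) (1 / e)"
  using cc_pos[of j] by (simp add: g_def poly_monom power_one_over)

lemma one_over_g: "e > 0 \<Longrightarrow> 1 / poly (monom (cc j) (2^j)) (1 / e) = g j e"
  using cc_pos[of j] by (simp add: g_def poly_monom power_one_over)

theorem lemma3p2:
  fixes A :: "nat \<Rightarrow> nat \<Rightarrow> 'a::finite" and s t :: nat
  shows "\<exists>p1 p2 :: real poly. (\<forall>x>0. poly p2 x > 0) \<and>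
    (\<forall>\<epsilon>::real. \<epsilon> > 0 \<longrightarrow>
      (\<forall>n::nat. real n \<ge> poly p1 (1 / \<epsilon>) \<longrightarrow>
        (\<forall>M :: nat \<Rightarrow> nat \<Rightarrow> 'a.
           real (copies (dedup_rows A s t) (dedup_height A s t) t M n)
             \<ge> \<epsilon> * real n ^ (dedup_height A s t + t)
           \<longrightarrow> real (copies A s t M n) \<ge> (1 / poly p2 (1 / \<epsilon>)) * real n ^ (s + t))))"
proof -
  obtain m where m: "m \<le> s" and ch: "\<forall>M \<epsilon> n. \<epsilon> > 0 \<longrightarrow> (\<forall>j<m. real n \<ge> 4 / g j \<epsilon>) \<longrightarrow>
     real (copies (dedup_rows A s t) (dedup_height A s t) t M n) \<ge> \<epsilon> * real n ^ (dedup_height A s t + t) \<longrightarrow>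
     real (copies (\<lambda>r c. A (Hl A s t s ! r) c) (length (Hl A s t s)) t M n) \<ge> g m \<epsilon> * real n ^ (length (Hl A s t s) + t)"
    using chain[of s s A t] by auto
  have Hs: "Hl A s t s = [0..<s]" by (simp add: Hl_def)
  have cA: "copies (\<lambda>r c. A (Hl A s t s ! r) c) s t M n = copies A s t M n" for M n
    by (rule copies_cong) (simp add: Hs)
  define p1 where "p1 = (\<Sum>j<s. monom (4 * cc j) (2^j) :: real poly)"
  define p2 where "p2 = (monom (cc m) (2^m) :: real poly)"
  show ?thesis
  proof -
    have P2: "\<forall>x>0. poly p2 x > 0" using cc_pos[of m] by (simp add: p2_def poly_monom)
    have P1: "\<forall>\<epsilon>::real. \<epsilon> > 0 \<longrightarrow>
      (\<forall>n::nat. real n \<ge> poly p1 (1 / \<epsilon>) \<longrightarrow>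
        (\<forall>M :: nat \<Rightarrow> nat \<Rightarrow> 'a.
           real (copies (dedup_rows A s t) (dedup_height A s t) t M n)
             \<ge> \<epsilon> * real n ^ (dedup_height A s t + t)
           \<longrightarrow> real (copies A s t M n) \<ge> (1 / poly p2 (1 / \<epsilon>)) * real n ^ (s + t)))"
    proof (intro allI impI)
    fix \<epsilon> :: real and n :: nat and M :: "nat \<Rightarrow> nat \<Rightarrow> 'a"
    assume eps: "\<epsilon> > 0" and nb: "real n \<ge> poly p1 (1 / \<epsilon>)"
      and hyp: "real (copies (dedup_rows A s t) (dedup_height A s t) t M n) \<ge> \<epsilon> * real n ^ (dedup_height A s t + t)"
    have "\<forall>j<m. real n \<ge> 4 / g j \<epsilon>"
    proof (intro allI impI)
      fix j assume "j < m"
      then have js: "j \<in> {..<s}" using m by simp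
      have "4 / g j \<epsilon> = poly (monom (4 * cc j) (2^j)) (1 / \<epsilon>)" using four_over_g[OF eps] .
      also have "\<dots> \<le> (\<Sum>j<s. poly (monom (4 * cc j) (2^j)) (1 / \<epsilon>))"
        by (rule member_le_sum[OF js]) (use eps in \<open>auto simp: poly_monom intro!: mult_nonneg_nonneg less_imp_le[OF cc_pos]\<close>)
      also have "\<dots> = poly p1 (1 / \<epsilon>)" by (simp add: p1_def poly_sum)
      finally show "real n \<ge> 4 / g j \<epsilon>" using nb by linarith
    qed
    then have "real (copies (\<lambda>r c. A (Hl A s t s ! r) c) (length (Hl A s t s)) t M n) \<ge> g m \<epsilon> * real n ^ (length (Hl A s t s) + t)"
      using ch eps hyp by blast
    then show "real (copies A s t M n) \<ge> (1 / poly p2 (1 / \<epsilon>)) * real n ^ (s + t)"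
      using cA[of M n] one_over_g[OF eps, of m] by (simp add: Hs p2_def)
  qed
  show ?thesis using P1 P2 by blast
  qed
qed

end
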